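(* Consider the click-through auction setting with $n\ge 2$ bidders, all with the same value $v_i=v\ge 0$. Suppose the CTR vector is uniformly distributed over two profiles $r,r'\in[0,1]^n$ for which there are two bidders $i\neq j$ such that $r_i=r'_j>r_j=r'_i\ge r_k$ and $r_i=r'_j>r_j=r'_i\ge r'_k$ for every $k\notin\{i,j\}$. Then for every $\varepsilon>0$ there is a calibrated, correlated information structure whose revenue is at least $vr_i-\varepsilon$.
   Context: Setting. There are $n$ bidders; bidder $i$ has known value per click $v_i$. The CTR vector $r\in[0,1]^n$ is drawn from a prior $G$ with finite support. An information structure is a probability distribution with finite support on pairs $(r,s)\in[0,1]^n\times[0,1]^n$ whose $r$-marginal is $G$. Given signals $s$, the winner $i^*$ maximizes $v_is_i$ (uniform tie-breaking), pays per click $p_{i^*}=\max_{j\ne i^*}v_js_j/s_{i^*}$ (revenue $0$ if $s_{i^*}=0$), only upon a click, which occurs with probability $r_{i^*}$; revenue is $\mathbb{E}[r_{i^*}p_{i^*}]$. Calibrated: $\mathbb{E}[r_i\mid s_i=t]=t$ for every $i$ and every $t$ with $\Pr[s_i=t]>0$. Correlated: not independent, where independent means $\mathbb{E}[r_i\mid s]=\mathbb{E}[r_i\mid s_i]$ for all $i$ and all $s$ in the support. *)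

theory Defs
  imports "HOL-Probability.Probability"
begin

text \<open>Bidders are the elements of a finite type 'n (so n = CARD('n)).
  A CTR vector / signal vector is a function 'n \<Rightarrow> real.
  An information structure is a pmf on pairs (r, s).\<close>

type_synonym 'n vec = "'n \<Rightarrow> real"

definition winners :: "'n::finite vec \<Rightarrow> 'n vec \<Rightarrow> 'n set" where
  "winners v s = {i. \<forall>j. v j * s j \<le> v i * s i}"

text \<open>Price per click of bidder i: max of the others' scores divided by s i;
  set to 0 when s i = 0 (then the revenue is 0).\<close>
definition price :: "'n::finite vec \<Rightarrow> 'n vec \<Rightarrow> 'n \<Rightarrow> real" where
  "price v s i = (if s i = 0 then 0 else Max {v j * s j | j. j \<noteq> i} / s i)"

text \<open>Expected revenue given (r, s), with uniform tie-breaking among winners.\<close>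
definition rev_at :: "'n::finite vec \<Rightarrow> 'n vec \<Rightarrow> 'n vec \<Rightarrow> real" where
  "rev_at v r s = (\<Sum>i\<in>winners v s. r i * price v s i) / real (card (winners v s))"

definition revenue :: "'n::finite vec \<Rightarrow> ('n vec \<times> 'n vec) pmf \<Rightarrow> real" where
  "revenue v I = measure_pmf.expectation I (\<lambda>(r, s). rev_at v r s)"

definition is_info_structure :: "'n::finite vec pmf \<Rightarrow> ('n vec \<times> 'n vec) pmf \<Rightarrow> bool" where
  "is_info_structure G I \<longleftrightarrow> finite (set_pmf I) \<and> map_pmf fst I = G \<and>
     (\<forall>x\<in>set_pmf I. \<forall>i. fst x i \<in> {0..1} \<and> snd x i \<in> {0..1})"

definition cexp :: "'a pmf \<Rightarrow> ('a \<Rightarrow> real) \<Rightarrow> 'a set \<Rightarrow> real" where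
  "cexp I f A = measure_pmf.expectation I (\<lambda>x. indicator A x * f x) / measure_pmf.prob I A"

definition calibrated :: "('n::finite vec \<times> 'n vec) pmf \<Rightarrow> bool" where
  "calibrated I \<longleftrightarrow> (\<forall>i t. measure_pmf.prob I {x. snd x i = t} > 0 \<longrightarrow>
      cexp I (\<lambda>x. fst x i) {x. snd x i = t} = t)"

definition independent_is :: "('n::finite vec \<times> 'n vec) pmf \<Rightarrow> bool" where
  "independent_is I \<longleftrightarrow> (\<forall>i. \<forall>x\<in>set_pmf I.
      cexp I (\<lambda>y. fst y i) {y. snd y = snd x} = cexp I (\<lambda>y. fst y i) {y. snd y i = snd x i})"

definition correlated :: "('n::finite vec \<times> 'n vec) pmf \<Rightarrow> bool" where
  "correlated I \<longleftrightarrow> \<not> independent_is I"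

end

theory Submission
  imports Defs
begin

lemma binom_id: "(n choose k) * (n - k) = (n choose Suc k) * Suc k"
  using binomial_absorb_comp[of n k] times_binomial_minus1_eq[of "Suc k" n]
  by (simp add: mult.commute)

lemma rev_lemma:
  fixes v x y \<rho> :: real and s R :: "'n::finite \<Rightarrow> real" and p q :: 'n
  assumes v: "v \<ge> 0" and pq: "p \<noteq> q" and sp: "s p = x" and sq: "s q = y"
    and y: "0 \<le> y" "y < x" and oth: "\<forall>l. l \<noteq> p \<and> l \<noteq> q \<longrightarrow> s l \<le> y"
    and Rp: "R p = \<rho>"
  shows "rev_at (\<lambda>_. v) R s = \<rho> * v * y / x"
proof (cases "v = 0")
  case True
  have W: "winners (\<lambda>_. v) s = UNIV" using True by (auto simp: winners_def)
  have pr: "price (\<lambda>_. v) s l = 0" for l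
  proof -
    have "{v * s j' | j'. j' \<noteq> l} = {0}"
    proof -
      obtain j' where "j' \<noteq> l" using pq by metis
      then show ?thesis using True by auto
    qed
    then show ?thesis by (simp add: price_def)
  qed
  show ?thesis unfolding rev_at_def W using True pr[unfolded True] by simp
next
  case False
  hence vp: "v > 0" using v by simp
  have sle: "s l \<le> x" for l using oth y sp sq by (cases "l = p"; cases "l = q") force+
  have slt: "l \<noteq> p \<Longrightarrow> s l < x" for l using oth y sq by (cases "l = q") force+
  have W: "winners (\<lambda>_. v) s = {p}"
  proof -
    have "p \<in> winners (\<lambda>_. v) s" using sle vp sp by (auto simp: winners_def intro: mult_left_mono)
    moreover have "l \<notin> winners (\<lambda>_. v) s" if "l \<noteq> p" for l
      using slt[OF that] vp sp unfolding winners_def by (auto intro!: exI[of _ p])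
    ultimately show ?thesis by auto
  qed
  have M: "Max {v * s j' | j'. j' \<noteq> p} = v * y"
  proof (rule Max_eqI)
    show "finite {v * s j' | j'. j' \<noteq> p}" by simp
    show "v * y \<in> {v * s j' | j'. j' \<noteq> p}" using pq sq by auto
    fix z assume "z \<in> {v * s j' | j'. j' \<noteq> p}"
    then obtain l where "l \<noteq> p" "z = v * s l" by auto
    moreover have "s l \<le> y" using oth sq \<open>l \<noteq> p\<close> by (cases "l = q") auto
    ultimately show "z \<le> v * y" using vp by (simp add: mult_left_mono)
  qed
  have "x \<noteq> 0" using y by simp
  then show ?thesis unfolding rev_at_def W using sp Rp M by (simp add: price_def)
qed

lemma master:
  fixes f :: "bool \<times> nat \<Rightarrow> 'b" and g :: "'b \<Rightarrow> real"
  shows "measure_pmf.expectation (map_pmf f (pair_pmf (pmf_of_set (UNIV::bool set)) (binomial_pmf n (1/2)))) g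
     = (\<Sum>k\<le>n. (real (n choose k) / 2^n) / 2 * (g (f (True,k)) + g (f (False,k))))"
proof -
  let ?P = "pair_pmf (pmf_of_set (UNIV::bool set)) (binomial_pmf n (1/2))"
  have "measure_pmf.expectation (map_pmf f ?P) g = measure_pmf.expectation ?P (\<lambda>x. g (f x))" by simp
  also have "\<dots> = (\<Sum>a\<in>UNIV \<times> {..n}. g (f a) * pmf ?P a)"
    by (rule integral_measure_pmf_real) auto
  also have "\<dots> = (\<Sum>c\<in>UNIV. \<Sum>k\<le>n. g (f (c,k)) * pmf ?P (c,k))"
    by (simp add: sum.cartesian_product)
  also have "\<dots> = (\<Sum>k\<le>n. g (f (True,k)) * pmf ?P (True,k) + g (f (False,k)) * pmf ?P (False,k))"
    by (simp add: UNIV_bool sum.distrib add.commute)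
  also have "\<dots> = (\<Sum>k\<le>n. (real (n choose k) / 2^n) / 2 * (g (f (True,k)) + g (f (False,k))))"
  proof (rule sum.cong[OF refl])
    fix k assume "k \<in> {..n}"
    hence "(1/2::real)^k * (1 - 1/2)^(n-k) = 1 / 2^n"
      by (simp add: power_divide power_add[symmetric])
    then show "g (f (True,k)) * pmf ?P (True,k) + g (f (False,k)) * pmf ?P (False,k)
       = (real (n choose k) / 2^n) / 2 * (g (f (True,k)) + g (f (False,k)))"
      by (simp add: pmf_pair field_simps)
  qed
  finally show ?thesis .
qed

lemma calib_sum:
  fixes a b t0 :: real and n :: nat and t :: "nat \<Rightarrow> real"
  assumes t: "t = (\<lambda>x. b + (a - b) * real x / real (Suc n))"
  shows "(\<Sum>k\<le>n. (real (n choose k) / 2^n) / 2 *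
     ((if t (Suc k) = t0 then 1 else 0) * (a - t0) + (if t k = t0 then 1 else 0) * (b - t0))) = 0"
proof -
  define w where "w k = real (n choose k) / 2^n" for k
  define B where "B x = (if t x = t0 then 1 else 0) * (w x * real x)" for x
  define m where "m = real (Suc n)"
  have mpos: "m > 0" "m \<noteq> 0" by (simp_all add: m_def)
  have t': "t = (\<lambda>x. b + (a - b) * real x / m)" using t by (simp add: m_def)
  define c where "c = (a - b) / (2 * m)"
  have tm: "(real (n choose k) / 2^n) / 2 *
     ((if t (Suc k) = t0 then 1 else 0) * (a - t0) + (if t k = t0 then 1 else 0) * (b - t0))
     = c * (B (Suc k) - B k)" if "k \<le> n" for k
  proof -
    have e1: "a - t (Suc k) = (a - b) * real (n - k) / m"
      using that mpos by (simp add: t' of_nat_diff field_simps m_def)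
    have e2: "b - t k = - ((a - b) * real k / m)"
      using mpos by (simp add: t' field_simps)
    have bi: "w k * real (n - k) = w (Suc k) * real (Suc k)"
    proof -
      have "real ((n choose k) * (n - k)) = real ((n choose Suc k) * Suc k)" by (simp only: binom_id)
      then show ?thesis unfolding w_def by (simp add: field_simps)
    qed
    have "(real (n choose k) / 2^n) / 2 *
     ((if t (Suc k) = t0 then 1 else 0) * (a - t0) + (if t k = t0 then 1 else 0) * (b - t0))
     = w k / 2 * ((if t (Suc k) = t0 then 1 else 0) * (a - t (Suc k)) + (if t k = t0 then 1 else 0) * (b - t k))"
      unfolding w_def by auto
    also have "\<dots> = c * ((if t (Suc k) = t0 then 1 else 0) * (w k * real (n - k)) - B k)"
      unfolding e1 e2 B_def c_def
      by (cases "t (Suc k) = t0"; cases "t k = t0"; simp add: divide_simps algebra_simps mpos)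
    also have "\<dots> = c * (B (Suc k) - B k)" unfolding bi B_def by simp
    finally show ?thesis .
  qed
  have "(\<Sum>k\<le>n. (real (n choose k) / 2^n) / 2 *
     ((if t (Suc k) = t0 then 1 else 0) * (a - t0) + (if t k = t0 then 1 else 0) * (b - t0)))
     = (\<Sum>k\<le>n. c * (B (Suc k) - B k))" by (rule sum.cong[OF refl], rule tm, simp)
  also have "\<dots> = c * ((\<Sum>k\<le>n. B (Suc k)) - (\<Sum>k\<le>n. B k))"
    by (simp add: sum_subtractf right_diff_distrib[symmetric] sum_distrib_left[symmetric])
  also have "(\<Sum>k\<le>n. B (Suc k)) = (\<Sum>k\<le>n. B k)"
  proof -
    have "B 0 = 0" "B (Suc n) = 0" by (simp_all add: B_def w_def)
    then show ?thesis using sum.atMost_Suc_shift[of B n] sum.atMost_Suc[of B n] by simp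
  qed
  finally show ?thesis by simp
qed

lemma wsum: "(\<Sum>k\<le>n. real (n choose k) / 2^n) = (1::real)"
proof -
  have "(\<Sum>k\<le>n. real (n choose k)) = (2::real)^n"
    using choose_row_sum[of n] by (metis of_nat_numeral of_nat_power of_nat_sum)
  then show ?thesis by (simp add: sum_divide_distrib[symmetric])
qed

lemma wsum2: "(\<Sum>k\<le>n. real (n choose k) / 2^n / real (Suc k)) \<le> 2 / real (Suc n)"
proof -
  have e: "real (n choose k) / real (Suc k) = real (Suc n choose Suc k) / real (Suc n)" for k
  proof -
    have "real (Suc n * (n choose k)) = real ((Suc n choose Suc k) * Suc k)"
      by (simp only: Suc_times_binomial_eq)
    then show ?thesis by (simp add: field_simps del: of_nat_Suc) (simp add: algebra_simps)
  qed
  have s1: "(\<Sum>k\<le>n. real (Suc n choose Suc k)) \<le> (2::real)^Suc n"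
  proof -
    have "(\<Sum>k\<le>Suc n. real (Suc n choose k)) = (2::real)^Suc n"
      using choose_row_sum[of "Suc n"] by (metis of_nat_numeral of_nat_power of_nat_sum)
    then show ?thesis using sum.atMost_Suc_shift[of "\<lambda>k. real (Suc n choose k)" n] by simp
  qed
  have "(\<Sum>k\<le>n. real (n choose k) / 2^n / real (Suc k))
      = (\<Sum>k\<le>n. real (Suc n choose Suc k)) / (2^n * real (Suc n))"
  proof -
    have "(\<Sum>k\<le>n. real (n choose k) / 2^n / real (Suc k))
        = (\<Sum>k\<le>n. real (Suc n choose Suc k) / (2^n * real (Suc n)))"
    proof (rule sum.cong[OF refl])
      fix k
      have "real (n choose k) / 2^n / real (Suc k) = (real (n choose k) / real (Suc k)) / 2^n"
        by (simp add: divide_divide_eq_left mult.commute)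
      also have "\<dots> = real (Suc n choose Suc k) / (2^n * real (Suc n))"
        unfolding e by (simp add: divide_divide_eq_left mult.commute)
      finally show "real (n choose k) / 2^n / real (Suc k) = real (Suc n choose Suc k) / (2^n * real (Suc n))" .
    qed
    then show ?thesis by (simp only: sum_divide_distrib[symmetric])
  qed
  also have "\<dots> \<le> 2^Suc n / (2^n * real (Suc n))"
    by (rule divide_right_mono[OF s1]) simp
  also have "\<dots> = 2 / real (Suc n)" by simp
  finally show ?thesis .
qed

lemma rev_sum:
  fixes a b :: real and n :: nat and t :: "nat \<Rightarrow> real"
  assumes t: "t = (\<lambda>x. b + (a - b) * real x / real (Suc n))" and b: "b \<ge> 0" and ab: "a > b"
  shows "(\<Sum>k\<le>n. real (n choose k) / 2^n * (t k / t (Suc k))) \<ge> 1 - 2 / real (Suc n)"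
proof -
  have r: "t k / t (Suc k) \<ge> 1 - 1 / real (Suc k)" for k
  proof -
    have tp: "t (Suc k) > 0" using t b ab by (auto intro!: add_nonneg_pos simp del: of_nat_Suc)
    have "t k * real (Suc k) \<ge> real k * t (Suc k)"
      using t b by (simp add: algebra_simps add_divide_distrib)
    then have "real k / real (Suc k) \<le> t k / t (Suc k)"
      using tp by (simp add: divide_simps del: of_nat_Suc)
    moreover have "real k / real (Suc k) = 1 - 1 / real (Suc k)" by (simp add: field_simps)
    ultimately show ?thesis by simp
  qed
  have "(\<Sum>k\<le>n. real (n choose k) / 2^n * (t k / t (Suc k)))
     \<ge> (\<Sum>k\<le>n. real (n choose k) / 2^n * (1 - 1 / real (Suc k)))"
    by (rule sum_mono) (rule mult_left_mono[OF r], simp)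
  moreover have "(\<Sum>k\<le>n. real (n choose k) / 2^n * (1 - 1 / real (Suc k)))
     = (\<Sum>k\<le>n. real (n choose k) / 2^n) - (\<Sum>k\<le>n. real (n choose k) / 2^n / real (Suc k))"
    by (simp add: sum_subtractf right_diff_distrib del: of_nat_Suc)
  ultimately show ?thesis using wsum[of n] wsum2[of n] by linarith
qed

theorem mainTheorem5:
  fixes v :: real and r r' :: "'n::finite \<Rightarrow> real" and i j :: 'n
  assumes "CARD('n) \<ge> 2"
    and "v \<ge> 0"
    and "\<forall>k. r k \<in> {0..1} \<and> r' k \<in> {0..1}"
    and "i \<noteq> j"
    and "r i = r' j" and "r' j > r j" and "r j = r' i"
    and "\<forall>k. k \<noteq> i \<and> k \<noteq> j \<longrightarrow> r k \<le> r j \<and> r' k \<le> r' i"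
  shows "\<forall>\<epsilon>>0. \<exists>I. is_info_structure (pmf_of_set {r, r'}) I \<and> calibrated I \<and>
           correlated I \<and> revenue (\<lambda>_. v) I \<ge> v * r i - \<epsilon>"
proof (intro allI impI)
  fix \<epsilon> :: real assume ep: "\<epsilon> > 0"
  note rng = assms(3) and ij = assms(4) and oth = assms(8)
  define a where "a = r i"
  define b where "b = r j"
  have ab: "a > b" using assms(5,6) by (simp add: a_def b_def)
  have b0: "b \<ge> 0" using rng by (simp add: b_def)
  have a1: "a \<le> 1" using rng by (simp add: a_def)
  have ri: "r i = a" and rj: "r j = b" and r'i: "r' i = b" and r'j: "r' j = a"
    using assms(5,7) by (simp_all add: a_def b_def)
  define N where "N = nat \<lceil>2 * a * v / \<epsilon>\<rceil>"
  define n where "n = Suc N"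
  define t where "t = (\<lambda>x::nat. b + (a - b) * real x / real (Suc n))"
  define c where "c = (\<lambda>l. (r l + r' l) / 2)"
  define \<sigma> where "\<sigma> = (\<lambda>x y l. if l = i then t x else if l = j then t y else c l)"
  define f where "f = (\<lambda>(e::bool, k::nat). if e then (r, \<sigma> (Suc k) k) else (r', \<sigma> k (Suc k)))"
  define P where "P = pair_pmf (pmf_of_set (UNIV::bool set)) (binomial_pmf n (1/2))"
  define I where "I = map_pmf f P"
  define w where "w = (\<lambda>k. real (n choose k) / 2^n)"
  have fT: "f (True, k) = (r, \<sigma> (Suc k) k)" and fF: "f (False, k) = (r', \<sigma> k (Suc k))" for k
    by (simp_all add: f_def)
  have \<sigma>i: "\<sigma> x y i = t x" and \<sigma>j: "\<sigma> x y j = t y" for x y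
    using ij by (simp_all add: \<sigma>_def)
  have \<sigma>o: "l \<noteq> i \<Longrightarrow> l \<noteq> j \<Longrightarrow> \<sigma> x y l = c l" for x y l by (simp add: \<sigma>_def)
  have E: "measure_pmf.expectation I g = (\<Sum>k\<le>n. w k / 2 * (g (f (True,k)) + g (f (False,k))))" for g
    unfolding I_def P_def w_def by (rule master)
  have Pr: "measure_pmf.prob I A = (\<Sum>k\<le>n. w k / 2 * (indicator A (f (True,k)) + indicator A (f (False,k))))" for A
    using E[of "indicator A"] by simp
  have tinj: "t x = t y \<longleftrightarrow> x = y" for x y
    using ab by (auto simp: t_def)
  have tmono: "t x < t y \<longleftrightarrow> x < y" for x y
  proof -
    have "t y - t x = (a - b) * (real y - real x) / real (Suc n)"
      by (simp add: t_def diff_divide_distrib right_diff_distrib)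
    moreover have "t x < t y \<longleftrightarrow> 0 < t y - t x" by simp
    ultimately show ?thesis using ab by (simp add: zero_less_divide_iff zero_less_mult_iff del: of_nat_Suc)
  qed
  have tge: "t x \<ge> b" for x using ab by (simp add: t_def)
  have tle: "x \<le> Suc n \<Longrightarrow> t x \<le> a" for x
  proof -
    assume "x \<le> Suc n"
    hence "real x / real (Suc n) \<le> 1" by simp
    hence "(a - b) * (real x / real (Suc n)) \<le> (a - b)" using ab by (intro mult_left_le) auto
    thus "t x \<le> a" by (simp add: t_def)
  qed
  have setP: "set_pmf P = UNIV \<times> {..n}" by (simp add: P_def)
  have setI: "set_pmf I = f ` (UNIV \<times> {..n})" by (simp add: I_def setP)
  have cal: "measure_pmf.expectation I (\<lambda>x. indicator {x. snd x l = t0} x * fst x l)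
       = t0 * measure_pmf.prob I {x. snd x l = t0}" for l t0
  proof -
    let ?A = "{x. snd x l = t0}"
    have Z: "(\<Sum>k\<le>n. w k / 2 * (indicator ?A (f (True,k)) * (fst (f (True,k)) l - t0)
                 + indicator ?A (f (False,k)) * (fst (f (False,k)) l - t0))) = 0"
    proof (cases "l = i")
      case True
      show ?thesis using calib_sum[OF t_def, of t0] unfolding True fT fF
        by (simp add: \<sigma>i ri r'i w_def indicator_def of_bool_def)
    next
      case F1: False
      show ?thesis
      proof (cases "l = j")
        case True
        show ?thesis using calib_sum[OF t_def, of t0] unfolding True fT fF
          by (simp add: \<sigma>j rj r'j w_def indicator_def of_bool_def add.commute)
      next
        case False
        have "indicator ?A (f (True,k)) * (fst (f (True,k)) l - t0)
                 + indicator ?A (f (False,k)) * (fst (f (False,k)) l - t0) = 0" for k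
          unfolding fT fF using F1 False by (simp add: \<sigma>o c_def indicator_def)
        then show ?thesis by simp
      qed
    qed
    have "measure_pmf.expectation I (\<lambda>x. indicator ?A x * fst x l) - t0 * measure_pmf.prob I ?A
       = (\<Sum>k\<le>n. w k / 2 * (indicator ?A (f (True,k)) * (fst (f (True,k)) l - t0)
                 + indicator ?A (f (False,k)) * (fst (f (False,k)) l - t0)))"
      unfolding E Pr by (simp add: sum_distrib_left sum_subtractf[symmetric] algebra_simps)
    then show ?thesis using Z by simp
  qed
  have calI: "calibrated I"
    unfolding calibrated_def cexp_def
  proof (intro allI impI)
    fix l t0 assume "measure_pmf.prob I {x. snd x l = t0} > 0"
    then show "measure_pmf.expectation I (\<lambda>x. indicator {x. snd x l = t0} x * fst x l) /
        measure_pmf.prob I {x. snd x l = t0} = t0" using cal[of l t0] by simp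
  qed
  have corr: "correlated I"
  proof -
    define x0 where "x0 = f (True, 0)"
    have x0I: "x0 \<in> set_pmf I" unfolding setI x0_def by auto
    let ?A = "{y. snd y = snd x0}"
    let ?B = "{y. snd y i = snd x0 i}"
    have pA: "measure_pmf.prob I ?A > 0" by (rule measure_pmf_posI[OF x0I]) simp
    have pB: "measure_pmf.prob I ?B > 0" by (rule measure_pmf_posI[OF x0I]) simp
    have cB: "cexp I (\<lambda>y. fst y i) ?B = t 1"
      using cal[of i "t 1"] pB unfolding cexp_def x0_def fT by (simp add: \<sigma>i)
    have nF: "indicator ?A (f (False,k)) = (0::real)" for k
    proof -
      have "\<sigma> k (Suc k) j \<noteq> \<sigma> 1 0 j" by (simp add: \<sigma>j tinj)
      hence "\<sigma> k (Suc k) \<noteq> \<sigma> 1 0" by metis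
      thus ?thesis unfolding x0_def fT fF by simp
    qed
    have "measure_pmf.expectation I (\<lambda>y. indicator ?A y * fst y i) = a * measure_pmf.prob I ?A"
      unfolding E Pr by (simp add: nF fT ri sum_distrib_left algebra_simps)
    hence cA: "cexp I (\<lambda>y. fst y i) ?A = a" using pA unfolding cexp_def by simp
    have "t 1 < a"
    proof -
      have "t 1 < t (Suc n)" using tmono n_def by simp
      moreover have "t (Suc n) = a" by (simp add: t_def)
      ultimately show ?thesis by simp
    qed
    hence "cexp I (\<lambda>y. fst y i) ?A \<noteq> cexp I (\<lambda>y. fst y i) ?B" using cA cB by simp
    then show ?thesis unfolding correlated_def independent_is_def using x0I by blast
  qed
  have isI: "is_info_structure (pmf_of_set {r, r'}) I"
    unfolding is_info_structure_def
  proof (intro conjI)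
    show "finite (set_pmf I)" unfolding setI by simp
    have "r \<noteq> r'" using ab ri r'i by force
    have h: "(\<lambda>x. fst (f x)) = (\<lambda>x. if fst x then r else r')" by (auto simp: f_def)
    have "map_pmf fst I = map_pmf (\<lambda>e. if e then r else r') (map_pmf fst P)"
      unfolding I_def by (simp add: pmf.map_comp o_def h)
    also have "\<dots> = map_pmf (\<lambda>e. if e then r else r') (pmf_of_set UNIV)"
      unfolding P_def map_fst_pair_pmf ..
    also have "\<dots> = pmf_of_set ((\<lambda>e. if e then r else r') ` UNIV)"
      using \<open>r \<noteq> r'\<close> by (intro map_pmf_of_set_inj) (auto simp: inj_on_def)
    also have "(\<lambda>e. if e then r else r') ` UNIV = {r, r'}" by (auto simp: UNIV_bool)
    finally show "map_pmf fst I = pmf_of_set {r, r'}" .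
  next
    show "\<forall>x\<in>set_pmf I. \<forall>l. fst x l \<in> {0..1} \<and> snd x l \<in> {0..1}"
    proof (intro ballI allI)
    fix x l assume "x \<in> set_pmf I"
    then obtain e k where k: "k \<le> n" and x: "x = f (e, k)" unfolding setI by auto
    have c01: "c l \<in> {0..1}" using rng[rule_format, of l] by (auto simp: c_def)
    have t01: "y \<le> Suc n \<Longrightarrow> t y \<in> {0..1}" for y using tge[of y] tle[of y] b0 a1 by auto
    have "\<sigma> y z l \<in> {0..1}" if "y \<le> Suc n" "z \<le> Suc n" for y z
      using t01 that c01 by (simp add: \<sigma>_def)
    then show "fst x l \<in> {0..1} \<and> snd x l \<in> {0..1}"
      using k rng by (cases e) (auto simp: x fT fF)
    qed
  qed
  have cle: "l \<noteq> i \<Longrightarrow> l \<noteq> j \<Longrightarrow> c l \<le> b" for l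
    using oth[rule_format, of l] by (simp add: c_def rj r'i[symmetric] b_def)
  have rT: "rev_at (\<lambda>_. v) r (\<sigma> (Suc k) k) = a * v * t k / t (Suc k)" for k
    by (rule rev_lemma[OF assms(2) ij]) (auto simp: \<sigma>i \<sigma>j \<sigma>o cle tmono ri intro: order_trans[OF _ tge] order_trans[OF b0 tge])
  have rF: "rev_at (\<lambda>_. v) r' (\<sigma> k (Suc k)) = a * v * t k / t (Suc k)" for k
    by (rule rev_lemma[OF assms(2) ij[symmetric]]) (auto simp: \<sigma>i \<sigma>j \<sigma>o cle tmono r'j intro: order_trans[OF _ tge] order_trans[OF b0 tge])
  have "revenue (\<lambda>_. v) I = (\<Sum>k\<le>n. w k * (t k / t (Suc k))) * (a * v)"
    unfolding revenue_def E by (simp add: fT fF rT rF sum_distrib_right) (simp add: ac_simps)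
  also have "\<dots> \<ge> (1 - 2 / real (Suc n)) * (a * v)"
    using rev_sum[OF t_def b0 ab] assms(2) ab b0 unfolding w_def
    by (intro mult_right_mono) auto
  finally have R: "revenue (\<lambda>_. v) I \<ge> (1 - 2 / real (Suc n)) * (a * v)" .
  have "2 * a * v / \<epsilon> \<le> real N" unfolding N_def by linarith
  hence "2 * a * v \<le> \<epsilon> * real (Suc n)" using ep by (simp add: n_def field_simps)
  hence "2 / real (Suc n) * (a * v) \<le> \<epsilon>" by (simp add: field_simps del: of_nat_Suc)
  hence "revenue (\<lambda>_. v) I \<ge> v * r i - \<epsilon>" using R by (simp add: ri algebra_simps)
  then show "\<exists>I. is_info_structure (pmf_of_set {r, r'}) I \<and> calibrated I \<and>
           correlated I \<and> revenue (\<lambda>_. v) I \<ge> v * r i - \<epsilon>"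
    using isI calI corr by blast
qed

end
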